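(* Let $V$ be a separable real Banach space with topological dual $V^*$, and let $M\subset V^*$ be a linearly independent set of continuous linear functionals that separates the points of $V$ and is fundamental with respect to the weak$^*$-topology (i.e. its linear span is weak$^*$-dense in $V^*$). Let $X=(X_m)_{m\in M}$ be a random variable with values in $(\mathbb R^M,\bigotimes_{m\in M}\mathcal B(\mathbb R))$ on a complete probability space $(\Omega,\mathcal F,\mathbb P)$, such that $X$ almost surely lies in the range of the embedding $V\ni v\mapsto (m(v))_{m\in M}\in\mathbb R^M$. Then there is a random variable $\tilde X:\Omega\to V$ which is measurable with respect to the Borel $\sigma$-algebra of $V$ and whose image under this embedding equals $X$ almost surely, i.e. $m(\tilde X)=X_m$ for all $m\in M$ almost surely.
   Context: The embedding $v\mapsto(m(v))_{m\in M}$ is injective since $M$ separates points. All random variables live on a complete probability space. *)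

theory Defs
  imports "HOL-Analysis.Analysis" "HOL-Probability.Probability"
begin

text \<open>The weak-star topology on the dual space: the initial topology of the
  evaluation maps, i.e. the pullback of the product topology on functions
  along the map sending a functional to its underlying function.\<close>
definition weak_star_topology :: "('v::real_normed_vector \<Rightarrow>\<^sub>L real) topology" where
  "weak_star_topology = pullback_topology UNIV blinfun_apply euclidean"

end

theory Submission imports Defs begin

definition sepd :: "'a set set \<Rightarrow> 'a set \<Rightarrow> 'a set \<Rightarrow> bool" where
  "sepd AA C E \<longleftrightarrow> (\<exists>S\<in>AA. C \<subseteq> S \<and> S \<inter> E = {})"

lemma sepd_UN:
  assumes sa: "sigma_algebra UNIV AA"
    and h: "\<And>n m. sepd AA (Cs n) (Es (m::nat))"
  shows "sepd AA (\<Union>n::nat. Cs n) (\<Union>m. Es m)"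
proof -
  from h obtain S where S: "\<And>n m. S n m \<in> AA \<and> Cs n \<subseteq> S n m \<and> S n m \<inter> Es m = {}"
    unfolding sepd_def by metis
  let ?S = "\<Union>n. \<Inter>m. S n m"
  have I: "(\<Inter>m. S n m) \<in> AA" for n
    using S sigma_algebra.countable_INT[OF sa, of "S n" UNIV] by auto
  have "?S \<in> AA"
    using I sigma_algebra.countable_UN[OF sa, of "\<lambda>n. \<Inter>m. S n m" UNIV] by auto
  moreover have "(\<Union>n. Cs n) \<subseteq> ?S" using S by blast
  moreover have "?S \<inter> (\<Union>m. Es m) = {}" using S by blast
  ultimately show ?thesis unfolding sepd_def by blast
qed

lemma split_closed:
  fixes C D :: "'a::metric_space set"
  assumes D: "countable D" "closure D = UNIV" and C: "closed C" and r: "r > 0"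
  shows "\<exists>Cs::nat \<Rightarrow> 'a set. (\<forall>n. closed (Cs n) \<and> Cs n \<subseteq> C \<and> (\<forall>z\<in>Cs n. \<forall>w\<in>Cs n. dist z w \<le> r))
     \<and> C \<subseteq> (\<Union>n. Cs n)"
proof -
  have Dne: "D \<noteq> {}" using D by auto
  define Cs where "Cs n = C \<inter> cball (from_nat_into D n) (r/2)" for n
  have f1: "closed (Cs n)" for n using C unfolding Cs_def by auto
  have f2: "Cs n \<subseteq> C" for n unfolding Cs_def by auto
  have f3: "\<forall>z\<in>Cs n. \<forall>w\<in>Cs n. dist z w \<le> r" for n
  proof (intro ballI)
    fix z w assume "z \<in> Cs n" "w \<in> Cs n"
    then have "dist (from_nat_into D n) z \<le> r/2" "dist (from_nat_into D n) w \<le> r/2"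
      unfolding Cs_def by auto
    then show "dist z w \<le> r" using dist_triangle[of z w "from_nat_into D n"]
      by (simp add: dist_commute)
  qed
  have cov: "C \<subseteq> (\<Union>n. Cs n)"
  proof
    fix x assume x: "x \<in> C"
    have "x \<in> closure D" using D by auto
    then obtain d where d: "d \<in> D" "dist d x < r/2"
      using r by (metis closure_approachable half_gt_zero)
    then obtain n where "from_nat_into D n = d" using from_nat_into_surj[OF D(1)] by blast
    then have "x \<in> Cs n" using d x unfolding Cs_def by auto
    then show "x \<in> (\<Union>n. Cs n)" by blast
  qed
  have P1: "\<forall>n. closed (Cs n) \<and> Cs n \<subseteq> C \<and> (\<forall>z\<in>Cs n. \<forall>w\<in>Cs n. dist z w \<le> r)"
    using f1 f2 f3 by simp
  show ?thesis using P1 cov by (intro exI[of _ Cs] conjI)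
qed

lemma refine:
  fixes C E D :: "'a::metric_space set"
  assumes sa: "sigma_algebra UNIV AA"
    and D: "countable D" "closure D = UNIV"
    and C: "closed C" and E: "closed E" and ns: "\<not> sepd AA C E" and r: "r > 0"
  shows "\<exists>C' E'. closed C' \<and> closed E' \<and> C' \<subseteq> C \<and> E' \<subseteq> E \<and>
     (\<forall>z\<in>C'. \<forall>w\<in>C'. dist z w \<le> r) \<and> (\<forall>z\<in>E'. \<forall>w\<in>E'. dist z w \<le> r) \<and> \<not> sepd AA C' E'"
proof -
  obtain Cs :: "nat \<Rightarrow> 'a set" where Cs: "\<forall>n. closed (Cs n) \<and> Cs n \<subseteq> C \<and> (\<forall>z\<in>Cs n. \<forall>w\<in>Cs n. dist z w \<le> r)" "C \<subseteq> (\<Union>n. Cs n)"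
    using split_closed[OF D C r] by blast
  obtain Es :: "nat \<Rightarrow> 'a set" where Es: "\<forall>n. closed (Es n) \<and> Es n \<subseteq> E \<and> (\<forall>z\<in>Es n. \<forall>w\<in>Es n. dist z w \<le> r)" "E \<subseteq> (\<Union>n. Es n)"
    using split_closed[OF D E r] by blast
  have "\<exists>n m. \<not> sepd AA (Cs n) (Es m)"
  proof (rule ccontr)
    assume "\<not> (\<exists>n m. \<not> sepd AA (Cs n) (Es m))"
    then have "\<And>n m. sepd AA (Cs n) (Es m)" by blast
    then have "sepd AA (\<Union>n. Cs n) (\<Union>m. Es m)" by (rule sepd_UN[OF sa])
    then obtain S where S1: "S \<in> AA" and S2: "(\<Union>n. Cs n) \<subseteq> S" and S3: "S \<inter> (\<Union>m. Es m) = {}"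
      unfolding sepd_def by blast
    have "C \<subseteq> S" using Cs(2) S2 by (rule subset_trans)
    moreover have "S \<inter> E = {}" using Es(2) S3 by auto
    ultimately have "sepd AA C E" unfolding sepd_def using S1 by blast
    then show False using ns by blast
  qed
  then obtain n m where nm: "\<not> sepd AA (Cs n) (Es m)" by blast
  show ?thesis using Cs(1)[THEN spec, of n] Es(1)[THEN spec, of m] nm by blast
qed

lemma sepd_closed:
  fixes A B D :: "'a::complete_space set"
  assumes sa: "sigma_algebra UNIV AA"
    and D: "countable D" "closure D = UNIV"
    and pts: "\<And>x y. x \<noteq> y \<Longrightarrow> \<exists>U\<in>AA. \<exists>e>0. ball x e \<subseteq> U \<and> ball y e \<inter> U = {}"
    and A: "closed A" and B: "closed B" and AB: "A \<inter> B = {}"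
  shows "sepd AA A B"
proof (rule ccontr)
  assume ns: "\<not> sepd AA A B"
  define P where "P n p \<longleftrightarrow> closed (fst p) \<and> closed (snd p) \<and> fst p \<subseteq> A \<and> snd p \<subseteq> B \<and>
     (\<forall>z\<in>fst p. \<forall>w\<in>fst p. dist z w \<le> (1/2::real)^n) \<and> (\<forall>z\<in>snd p. \<forall>w\<in>snd p. dist z w \<le> (1/2::real)^n)
     \<and> \<not> sepd AA (fst p) (snd p)" for n and p :: "'a set \<times> 'a set"
  define Q where "Q (n::nat) p q \<longleftrightarrow> fst q \<subseteq> fst p \<and> snd q \<subseteq> snd p" for n and p q :: "'a set \<times> 'a set"
  have "\<exists>f. \<forall>n. P n (f n) \<and> Q n (f n) (f (Suc n))"
  proof (rule dependent_nat_choice)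
    obtain C' E' where CE: "closed C'" "closed E'" "C' \<subseteq> A" "E' \<subseteq> B"
       "\<forall>z\<in>C'. \<forall>w\<in>C'. dist z w \<le> 1" "\<forall>z\<in>E'. \<forall>w\<in>E'. dist z w \<le> 1" "\<not> sepd AA C' E'"
      using refine[OF sa D A B ns, of 1] by auto
    have "P 0 (C', E')" unfolding P_def using CE by simp
    then show "\<exists>x. P 0 x" by (rule exI)
  next
    fix x n assume Px: "P n x"
    have r: "(0::real) < (1/2)^Suc n" by simp
    have cl: "closed (fst x)" "closed (snd x)" and ns': "\<not> sepd AA (fst x) (snd x)"
      and sub: "fst x \<subseteq> A" "snd x \<subseteq> B"
      using Px unfolding P_def by auto
    obtain C' E' where CE: "closed C'" "closed E'" "C' \<subseteq> fst x" "E' \<subseteq> snd x"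
       "\<forall>z\<in>C'. \<forall>w\<in>C'. dist z w \<le> (1/2)^Suc n" "\<forall>z\<in>E'. \<forall>w\<in>E'. dist z w \<le> (1/2)^Suc n"
       "\<not> sepd AA C' E'"
      using refine[OF sa D cl ns' r] by auto
    have "P (Suc n) (C', E')" unfolding P_def using CE sub by auto
    moreover have "Q n x (C', E')" unfolding Q_def using CE by simp
    ultimately show "\<exists>y. P (Suc n) y \<and> Q n x y" by blast
  qed
  then obtain f where f: "\<And>n. P n (f n)" "\<And>n. Q n (f n) (f (Suc n))" by blast
  have ne: "fst (f n) \<noteq> {}" "snd (f n) \<noteq> {}" for n
  proof -
    have "{} \<in> AA" "UNIV \<in> AA" using sa by (auto simp: sigma_algebra_iff2)
    then show "fst (f n) \<noteq> {}" "snd (f n) \<noteq> {}" using f(1)[of n] unfolding P_def sepd_def by auto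
  qed
  have mono1: "fst (f n) \<subseteq> fst (f m)" if "m \<le> n" for m n
    using lift_Suc_antimono_le[of "\<lambda>n. fst (f n)", OF _ that] f(2) unfolding Q_def by auto
  have mono2: "snd (f n) \<subseteq> snd (f m)" if "m \<le> n" for m n
    using lift_Suc_antimono_le[of "\<lambda>n. snd (f n)", OF _ that] f(2) unfolding Q_def by auto
  have small: "\<exists>n. (1/2::real)^n < e" if "e > 0" for e
    using real_arch_pow_inv[OF that, of "1/2"] by auto
  obtain x where x: "\<And>n. x \<in> fst (f n)"
  proof -
    have c1: "closed (fst (f n))" for n using f(1)[of n] unfolding P_def by auto
    have c2: "fst (f n) \<noteq> {}" for n by (rule ne)
    have c3: "m \<le> n \<Longrightarrow> fst (f n) \<subseteq> fst (f m)" for m n by (rule mono1)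
    have c4: "\<exists>n. \<forall>x\<in>fst (f n). \<forall>y\<in>fst (f n). dist x y < e" if e0: "e > 0" for e
    proof -
      obtain n where n: "(1/2::real)^n < e" using small[OF e0] by blast
      have "\<forall>x\<in>fst (f n). \<forall>y\<in>fst (f n). dist x y \<le> (1/2)^n" using f(1)[of n] unfolding P_def by blast
      then have "\<forall>x\<in>fst (f n). \<forall>y\<in>fst (f n). dist x y < e" using n by force
      then show ?thesis by blast
    qed
    show ?thesis using decreasing_closed_nest[of "\<lambda>n. fst (f n)", OF c1 c2 c3 c4] that by blast
  qed
  obtain y where y: "\<And>n. y \<in> snd (f n)"
  proof -
    have c1: "closed (snd (f n))" for n using f(1)[of n] unfolding P_def by auto
    have c2: "snd (f n) \<noteq> {}" for n by (rule ne)
    have c3: "m \<le> n \<Longrightarrow> snd (f n) \<subseteq> snd (f m)" for m n by (rule mono2)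
    have c4: "\<exists>n. \<forall>x\<in>snd (f n). \<forall>y\<in>snd (f n). dist x y < e" if e0: "e > 0" for e
    proof -
      obtain n where n: "(1/2::real)^n < e" using small[OF e0] by blast
      have "\<forall>x\<in>snd (f n). \<forall>y\<in>snd (f n). dist x y \<le> (1/2)^n" using f(1)[of n] unfolding P_def by blast
      then have "\<forall>x\<in>snd (f n). \<forall>y\<in>snd (f n). dist x y < e" using n by force
      then show ?thesis by blast
    qed
    show ?thesis using decreasing_closed_nest[of "\<lambda>n. snd (f n)", OF c1 c2 c3 c4] that by blast
  qed
  have "x \<in> A" "y \<in> B" using x[of 0] y[of 0] f(1)[of 0] unfolding P_def by auto
  then have "x \<noteq> y" using AB by auto
  then obtain U e where U: "U \<in> AA" "e > 0" "ball x e \<subseteq> U" "ball y e \<inter> U = {}" using pts by blast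
  obtain n where n: "(1/2::real)^n < e" using small[OF U(2)] by blast
  have "fst (f n) \<subseteq> ball x e"
  proof
    fix z assume "z \<in> fst (f n)"
    then have "dist x z \<le> (1/2)^n" using x[of n] f(1)[of n] unfolding P_def by auto
    then show "z \<in> ball x e" using n by auto
  qed
  moreover have "snd (f n) \<subseteq> ball y e"
  proof
    fix z assume "z \<in> snd (f n)"
    then have "dist y z \<le> (1/2)^n" using y[of n] f(1)[of n] unfolding P_def by auto
    then show "z \<in> ball y e" using n by auto
  qed
  ultimately have "sepd AA (fst (f n)) (snd (f n))" using U unfolding sepd_def by blast
  then show False using f(1)[of n] unfolding P_def by auto
qed

lemma closed_in_AA:
  fixes F D :: "'a::complete_space set"
  assumes sa: "sigma_algebra UNIV AA"
    and D: "countable D" "closure D = UNIV"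
    and pts: "\<And>x y. x \<noteq> y \<Longrightarrow> \<exists>U\<in>AA. \<exists>e>0. ball x e \<subseteq> U \<and> ball y e \<inter> U = {}"
    and F: "closed F"
  shows "F \<in> AA"
proof -
  define G where "G j = {x. \<forall>y\<in>F. dist x y \<ge> 1 / real (Suc j)}" for j
  have Gc: "closed (G j)" for j
  proof -
    have "G j = (\<Inter>y\<in>F. {x. dist x y \<ge> 1 / real (Suc j)})" unfolding G_def by auto
    moreover have "closed {x. dist x y \<ge> 1 / real (Suc j)}" for y
      by (intro closed_Collect_le continuous_intros)
    ultimately show ?thesis by auto
  qed
  have GF: "G j \<inter> F = {}" for j unfolding G_def by fastforce
  have cov: "- F \<subseteq> (\<Union>j. G j)"
  proof
    fix x assume "x \<in> - F"
    then obtain e where e: "e > 0" "ball x e \<subseteq> - F" using F open_contains_ball by (metis open_Compl)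
    obtain j where j: "1 / real (Suc j) < e" using e(1) by (metis nat_approx_posE)
    have "\<forall>y\<in>F. dist x y \<ge> 1 / real (Suc j)"
    proof
      fix y assume "y \<in> F"
      then have "y \<notin> ball x e" using e by auto
      then show "dist x y \<ge> 1 / real (Suc j)" using j by auto
    qed
    then show "x \<in> (\<Union>j. G j)" unfolding G_def by auto
  qed
  have "\<forall>j. \<exists>S. S \<in> AA \<and> F \<subseteq> S \<and> S \<inter> G j = {}"
  proof
    fix j
    have "F \<inter> G j = {}" using GF[of j] by blast
    then have "sepd AA F (G j)" using sepd_closed[OF sa D pts F Gc[of j]] by blast
    then show "\<exists>S. S \<in> AA \<and> F \<subseteq> S \<and> S \<inter> G j = {}" unfolding sepd_def by blast
  qed
  then have "\<exists>S. \<forall>j. S j \<in> AA \<and> F \<subseteq> S j \<and> S j \<inter> G j = {}" by (rule choice)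
  then obtain S :: "nat \<Rightarrow> 'a set" where S: "\<And>j. S j \<in> AA \<and> F \<subseteq> S j \<and> S j \<inter> G j = {}" by blast
  have "F \<subseteq> (\<Inter>j. S j)" using S by blast
  moreover have "(\<Inter>j. S j) \<subseteq> F"
  proof
    fix x assume x: "x \<in> (\<Inter>j. S j)"
    show "x \<in> F"
    proof (rule ccontr)
      assume "x \<notin> F"
      then obtain j where "x \<in> G j" using cov by blast
      moreover have "x \<in> S j" using x by blast
      ultimately show False using S[of j] by blast
    qed
  qed
  ultimately have "F = (\<Inter>j. S j)" by (rule equalityI)
  moreover have "(\<Inter>j. S j) \<in> AA" using S by (intro sigma_algebra.countable_INT[OF sa]) auto
  ultimately show ?thesis by simp
qed

lemma pts_from_open:
  fixes x y :: "'a::metric_space"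
  assumes "open O1" "open O2" "x \<in> O1" "y \<in> O2" "O1 \<subseteq> U" "O2 \<inter> U = {}"
  shows "\<exists>e>0. ball x e \<subseteq> U \<and> ball y e \<inter> U = {}"
proof -
  obtain e1 where e1: "e1 > 0" "ball x e1 \<subseteq> O1" using assms open_contains_ball by metis
  obtain e2 where e2: "e2 > 0" "ball y e2 \<subseteq> O2" using assms open_contains_ball by metis
  have "ball x (min e1 e2) \<subseteq> U" "ball y (min e1 e2) \<inter> U = {}" using e1 e2 assms by auto
  then show ?thesis using e1 e2 by (intro exI[of _ "min e1 e2"]) auto
qed

lemma cont_blin: "continuous_on UNIV (blinfun_apply (m :: 'v::real_normed_vector \<Rightarrow>\<^sub>L real))"
  by (rule linear_continuous_on) (rule blinfun.bounded_linear_right)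

theorem lemma3p9:
  fixes M :: "('v::banach \<Rightarrow>\<^sub>L real) set"
    and P :: "'w measure"
    and X :: "'w \<Rightarrow> ('v \<Rightarrow>\<^sub>L real) \<Rightarrow> real"
  assumes sep: "separable_space (euclidean :: 'v topology)"
    and indep: "independent M"
    and separates: "\<forall>x y. x \<noteq> y \<longrightarrow> (\<exists>m\<in>M. blinfun_apply m x \<noteq> blinfun_apply m y)"
    and fundamental: "weak_star_topology closure_of (span M) = UNIV"
    and prob: "prob_space P"
    and compl: "complete_measure P"
    and X_meas: "X \<in> measurable P (PiM M (\<lambda>_. borel))"
    and X_range: "AE \<omega> in P. \<exists>v. \<forall>m\<in>M. X \<omega> m = blinfun_apply m v"
  shows "\<exists>Xt. Xt \<in> borel_measurable P \<and> (AE \<omega> in P. \<forall>m\<in>M. blinfun_apply m (Xt \<omega>) = X \<omega> m)"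
proof -
  obtain D :: "'v set" where D: "countable D" "closure D = UNIV"
    using sep unfolding separable_space_def by auto
  define Xt where "Xt \<omega> = (SOME v. \<forall>m\<in>M. X \<omega> m = blinfun_apply m v)" for \<omega>
  have goodXt: "\<forall>m\<in>M. blinfun_apply m (Xt \<omega>) = X \<omega> m"
    if "\<exists>v. \<forall>m\<in>M. X \<omega> m = blinfun_apply m v" for \<omega>
  proof -
    have "\<forall>m\<in>M. X \<omega> m = blinfun_apply m (Xt \<omega>)"
      unfolding Xt_def by (rule someI_ex[OF that])
    then show ?thesis by simp
  qed
  have AEgood: "AE \<omega> in P. \<forall>m\<in>M. blinfun_apply m (Xt \<omega>) = X \<omega> m"
    using X_range by (rule eventually_mono) (rule goodXt)
  define AA where "AA = {A. Xt -` A \<inter> space P \<in> sets P}"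
  have sa: "sigma_algebra UNIV AA"
    unfolding sigma_algebra_iff2
  proof (intro conjI ballI allI impI)
    show "AA \<subseteq> Pow UNIV" by auto
    show "{} \<in> AA" unfolding AA_def by auto
  next
    fix s assume "s \<in> AA"
    then have "space P - (Xt -` s \<inter> space P) \<in> sets P" unfolding AA_def by auto
    moreover have "space P - (Xt -` s \<inter> space P) = Xt -` (UNIV - s) \<inter> space P" by auto
    ultimately show "UNIV - s \<in> AA" unfolding AA_def by auto
  next
    fix A :: "nat \<Rightarrow> 'v set" assume "range A \<subseteq> AA"
    then have "(\<Union>i. Xt -` A i \<inter> space P) \<in> sets P" unfolding AA_def
      by (intro sets.countable_UN) auto
    moreover have "(\<Union>i. Xt -` A i \<inter> space P) = Xt -` (\<Union>i. A i) \<inter> space P" by auto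
    ultimately show "(\<Union>i. A i) \<in> AA" unfolding AA_def by auto
  qed
  have gen: "{v. R (blinfun_apply m v)} \<in> AA" if m: "m \<in> M" and R: "open {r. R r}" for m R
  proof -
    have meas: "(\<lambda>\<omega>. X \<omega> m) \<in> borel_measurable P"
      using measurable_compose[OF X_meas measurable_component_singleton[OF m]] by simp
    have s1: "(\<lambda>\<omega>. X \<omega> m) -` {r. R r} \<inter> space P \<in> sets P"
      using measurable_sets[OF meas borel_open[OF R]] .
    have ae1: "AE \<omega> in P. \<omega> \<in> (\<lambda>\<omega>. X \<omega> m) -` {r. R r} \<inter> space P \<longleftrightarrow>
        \<omega> \<in> Xt -` {v. R (blinfun_apply m v)} \<inter> space P"
      using AEgood
    proof (rule eventually_mono)
      fix \<omega> assume "\<forall>m\<in>M. blinfun_apply m (Xt \<omega>) = X \<omega> m"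
      then have "blinfun_apply m (Xt \<omega>) = X \<omega> m" using m by blast
      then show "\<omega> \<in> (\<lambda>\<omega>. X \<omega> m) -` {r. R r} \<inter> space P \<longleftrightarrow>
        \<omega> \<in> Xt -` {v. R (blinfun_apply m v)} \<inter> space P" by simp
    qed
    have subs: "Xt -` {v. R (blinfun_apply m v)} \<inter> space P \<subseteq> space P" by blast
    have "Xt -` {v. R (blinfun_apply m v)} \<inter> space P \<in> sets P"
      by (rule complete_measure.in_sets_AE[OF compl ae1 s1 subs])
    then show ?thesis unfolding AA_def by auto
  qed
  have pts: "\<exists>U\<in>AA. \<exists>e>0. ball x e \<subseteq> U \<and> ball y e \<inter> U = {}" if xy: "x \<noteq> y" for x y
  proof -
    obtain m where m: "m \<in> M" "blinfun_apply m x \<noteq> blinfun_apply m y"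
      using separates xy by blast
    define q where "q = (blinfun_apply m x + blinfun_apply m y) / 2"
    have o1: "open {v. blinfun_apply m v < q}"
      using open_Collect_less[OF cont_blin continuous_on_const] .
    have o2: "open {v. q < blinfun_apply m v}"
      using open_Collect_less[OF continuous_on_const cont_blin] .
    have oq1: "open {r::real. r < q}"
      using open_lessThan[of q] unfolding lessThan_def .
    have oq2: "open {r::real. q < r}"
      using open_greaterThan[of q] unfolding greaterThan_def .
    have U1: "{v. blinfun_apply m v < q} \<in> AA" using gen[OF m(1) oq1] .
    have U2: "{v. q < blinfun_apply m v} \<in> AA" using gen[OF m(1) oq2] .
    have dj: "{v. q < blinfun_apply m v} \<inter> {v. blinfun_apply m v < q} = {}"
      "{v. blinfun_apply m v < q} \<inter> {v. q < blinfun_apply m v} = {}" by auto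
    show ?thesis
    proof (cases "blinfun_apply m x < blinfun_apply m y")
      case True
      then have "x \<in> {v. blinfun_apply m v < q}" "y \<in> {v. q < blinfun_apply m v}"
        unfolding q_def by auto
      from pts_from_open[OF o1 o2 this order_refl dj(1)] U1 show ?thesis by blast
    next
      case False
      then have F: "blinfun_apply m y < blinfun_apply m x" using m(2) by auto
      then have "x \<in> {v. q < blinfun_apply m v}" "y \<in> {v. blinfun_apply m v < q}"
        unfolding q_def by auto
      from pts_from_open[OF o2 o1 this order_refl dj(2)] U2 show ?thesis by blast
    qed
  qed
  have "Xt \<in> borel_measurable P"
  proof (rule borel_measurableI)
    fix S :: "'v set" assume "open S"
    then have "- S \<in> AA" using closed_in_AA[OF sa D pts closed_Compl] by blast
    then have "space P - (Xt -` (- S) \<inter> space P) \<in> sets P" unfolding AA_def by auto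
    moreover have "space P - (Xt -` (- S) \<inter> space P) = Xt -` S \<inter> space P" by auto
    ultimately show "Xt -` S \<inter> space P \<in> sets P" by simp
  qed
  then show ?thesis using AEgood by blast
qed

end
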